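(* Consider the secure distributed linearly separable computation problem with $\mathsf K_{\rm c}=1$, $\mathsf M=\frac{\mathsf K}{\mathsf N}\mathsf M'$ where $\mathsf M'=\mathsf N-\mathsf N_{\rm r}+1$. Let $g=\gcd(\mathsf N,\mathsf M')$ and suppose $\mathsf M'/g\ge 3$ and $\mathrm{Mod}(\mathsf N/g,\mathsf M'/g)=\mathsf M'/g-1$. Then $\eta^\star\ge\lceil\mathsf N/\mathsf M'\rceil$.
   Context: Problem setting. $\mathsf K,\mathsf N,\mathsf N_{\rm r}$ are positive integers with $\mathsf N_{\rm r}\le \mathsf N$ and $\mathsf N$ dividing $\mathsf K$. Fix a prime power $\mathsf q$ (sufficiently large) and a positive integer $\mathsf L$. Datasets $D_1,\dots,D_{\mathsf K}$ are independent; message $W_k=f_k(D_k)\in\mathbb F_{\mathsf q}^{\mathsf L}$, with $W_1,\dots,W_{\mathsf K}$ mutually independent and uniform over $\mathbb F_{\mathsf q}^{\mathsf L}$. The user wants $W_1+\cdots+W_{\mathsf K}$. A secure scheme consists of an assignment $\mathcal Z_n\subseteq[\mathsf K]$, $|\mathcal Z_n|\le\mathsf M$; a random variable $Q$ on a finite set independent of the datasets, given to all servers but not the user; transmissions $X_n=\psi_n(\{W_k:k\in\mathcal Z_n\},Q)\in\mathbb F_{\mathsf q}^{\mathsf T_n}$; decodability from $\{X_n:n\in\mathcal A\}$ for every $\mathcal A\subseteq[\mathsf N]$, $|\mathcal A|=\mathsf N_{\rm r}$; security $I(W_1,\dots,W_{\mathsf K};X_1,\dots,X_{\mathsf N}\mid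 W_1+\cdots+W_{\mathsf K})=0$. Communication cost $\mathsf R=\max_{|\mathcal A|=\mathsf N_{\rm r}}\sum_{n\in\mathcal A}\mathsf T_n/\mathsf L$; randomness size $\eta=H(Q)/\mathsf L$ ($\mathsf q$-ary units). $\mathsf R^\star$ is the minimum communication cost over secure schemes and $\eta^\star$ the minimum of $\eta$ over secure schemes with $\mathsf R=\mathsf R^\star$. Convention: $\mathrm{Mod}(b,a)\in\{1,\dots,a\}$ denotes the residue of $b$ modulo $a$, with $\mathrm{Mod}(b,a)=a$ when $a\mid b$. *)

theory Defs
  imports "HOL-Algebra.Ring" "HOL-Probability.Probability_Mass_Function"
begin

definition Modp :: "nat \<Rightarrow> nat \<Rightarrow> nat" where
  "Modp b a = (if b mod a = 0 then a else b mod a)"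

definition pmf_entropy :: "real \<Rightarrow> 'x pmf \<Rightarrow> real" where
  "pmf_entropy b p = - (\<Sum>x\<in>set_pmf p. pmf p x * log b (pmf p x))"

definition rv_entropy :: "real \<Rightarrow> 'w pmf \<Rightarrow> ('w \<Rightarrow> 'x) \<Rightarrow> real" where
  "rv_entropy b P f = pmf_entropy b (map_pmf f P)"

definition cond_mi :: "real \<Rightarrow> 'w pmf \<Rightarrow> ('w \<Rightarrow> 'x) \<Rightarrow> ('w \<Rightarrow> 'y) \<Rightarrow> ('w \<Rightarrow> 'z) \<Rightarrow> real" where
  "cond_mi b P X Y Z =
     rv_entropy b P (\<lambda>w. (X w, Z w)) + rv_entropy b P (\<lambda>w. (Y w, Z w))
     - rv_entropy b P (\<lambda>w. (X w, Y w, Z w)) - rv_entropy b P Z"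

definition vecs :: "('a, 'b) ring_scheme \<Rightarrow> nat \<Rightarrow> 'a list set" where
  "vecs F n = {xs. length xs = n \<and> set xs \<subseteq> carrier F}"

definition msg_space :: "('a, 'b) ring_scheme \<Rightarrow> nat \<Rightarrow> nat \<Rightarrow> (nat \<Rightarrow> 'a list) set" where
  "msg_space F K L = {W. (\<forall>k\<in>{1..K}. W k \<in> vecs F L) \<and> (\<forall>k. k \<notin> {1..K} \<longrightarrow> W k = [])}"

definition msum :: "('a, 'b) ring_scheme \<Rightarrow> nat \<Rightarrow> nat \<Rightarrow> (nat \<Rightarrow> 'a list) \<Rightarrow> 'a list" where
  "msum F K L W = foldr (\<lambda>k acc. map2 (add F) (W k) acc) [1..<K+1] (replicate L (zero F))"

(* sample distribution: messages i.i.d. uniform, independent of the randomness Q *)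
definition joint :: "('a, 'b) ring_scheme \<Rightarrow> nat \<Rightarrow> nat \<Rightarrow> nat pmf \<Rightarrow> ((nat \<Rightarrow> 'a list) \<times> nat) pmf" where
  "joint F K L PQ = pair_pmf (pmf_of_set (msg_space F K L)) PQ"

(* transmission of server n: X_n = psi_n({W_k : k in Z_n}, Q) *)
definition trans :: "(nat \<Rightarrow> nat set) \<Rightarrow> (nat \<Rightarrow> (nat \<Rightarrow> 'a list) \<Rightarrow> nat \<Rightarrow> 'a list)
     \<Rightarrow> nat \<Rightarrow> (nat \<Rightarrow> 'a list) \<times> nat \<Rightarrow> 'a list" where
  "trans Z \<psi> n \<omega> = \<psi> n (\<lambda>k. if k \<in> Z n then fst \<omega> k else []) (snd \<omega>)"

definition trans_all :: "nat \<Rightarrow> (nat \<Rightarrow> nat set) \<Rightarrow> (nat \<Rightarrow> (nat \<Rightarrow> 'a list) \<Rightarrow> nat \<Rightarrow> 'a list)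
     \<Rightarrow> (nat \<Rightarrow> 'a list) \<times> nat \<Rightarrow> nat \<Rightarrow> 'a list" where
  "trans_all N Z \<psi> \<omega> = (\<lambda>n. if n \<in> {1..N} then trans Z \<psi> n \<omega> else [])"

definition secure_scheme :: "('a, 'b) ring_scheme \<Rightarrow> nat \<Rightarrow> nat \<Rightarrow> nat \<Rightarrow> nat \<Rightarrow> nat
     \<Rightarrow> (nat \<Rightarrow> nat set) \<Rightarrow> (nat \<Rightarrow> nat) \<Rightarrow> (nat \<Rightarrow> (nat \<Rightarrow> 'a list) \<Rightarrow> nat \<Rightarrow> 'a list)
     \<Rightarrow> nat pmf \<Rightarrow> bool" where
  "secure_scheme F K N Nr M L Z T \<psi> PQ \<longleftrightarrow>
     (\<forall>n\<in>{1..N}. Z n \<subseteq> {1..K} \<and> card (Z n) \<le> M) \<and>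
     finite (set_pmf PQ) \<and>
     (\<forall>n\<in>{1..N}. \<forall>\<omega>\<in>set_pmf (joint F K L PQ). trans Z \<psi> n \<omega> \<in> vecs F (T n)) \<and>
     (\<forall>A. A \<subseteq> {1..N} \<and> card A = Nr \<longrightarrow>
        (\<exists>dec. \<forall>\<omega>\<in>set_pmf (joint F K L PQ).
            dec (\<lambda>n. if n \<in> A then trans Z \<psi> n \<omega> else []) = msum F K L (fst \<omega>))) \<and>
     cond_mi (real (card (carrier F))) (joint F K L PQ) fst (trans_all N Z \<psi>) (\<lambda>\<omega>. msum F K L (fst \<omega>)) = 0"

definition comm_cost :: "nat \<Rightarrow> nat \<Rightarrow> nat \<Rightarrow> (nat \<Rightarrow> nat) \<Rightarrow> real" where
  "comm_cost N Nr L T = Max {(\<Sum>n\<in>A. real (T n)) / real L | A. A \<subseteq> {1..N} \<and> card A = Nr}"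

definition rand_size :: "('a, 'b) ring_scheme \<Rightarrow> nat \<Rightarrow> nat pmf \<Rightarrow> real" where
  "rand_size F L PQ = pmf_entropy (real (card (carrier F))) PQ / real L"

definition opt_cost :: "('a, 'b) ring_scheme \<Rightarrow> nat \<Rightarrow> nat \<Rightarrow> nat \<Rightarrow> nat \<Rightarrow> nat \<Rightarrow> real" where
  "opt_cost F K N Nr M L = Inf {comm_cost N Nr L T | Z T \<psi> PQ. secure_scheme F K N Nr M L Z T \<psi> PQ}"

end

theory Submission
  imports Defs
begin


fun peel :: "(nat \<Rightarrow> nat set) \<Rightarrow> nat list \<Rightarrow> bool" where
  "peel hold [] = True"
| "peel hold (k # ks) = ((\<exists>n. n \<in> hold k \<and> (\<forall>k'\<in>set ks. n \<notin> hold k')) \<and> peel hold ks)"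

definition Iset :: "(nat \<Rightarrow> nat set) \<Rightarrow> nat \<Rightarrow> nat set \<Rightarrow> nat set" where
  "Iset hold K P = {k\<in>{1..K}. hold k \<inter> P = {}}"

fun valid :: "(nat \<Rightarrow> nat set) \<Rightarrow> nat \<Rightarrow> nat list \<Rightarrow> bool" where
  "valid hold K [] = True"
| "valid hold K (n # P) = ((\<exists>k\<in>Iset hold K (set P). n \<in> hold k) \<and> valid hold K P)"

lemma Iset_insert: "Iset hold K (insert n P) = {k\<in>Iset hold K P. n \<notin> hold k}"
  unfolding Iset_def by auto

lemma extract_chain:
  assumes "valid hold K P" "distinct ks'" "set ks' \<subseteq> Iset hold K (set P)" "peel hold ks'"
  shows "\<exists>ks. length ks = length P + length ks' \<and> distinct ks \<and> set ks \<subseteq> {1..K} \<and> peel hold ks"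
  using assms
proof (induction P arbitrary: ks')
  case Nil
  then show ?case by (rule_tac x=ks' in exI) (auto simp: Iset_def)
next
  case (Cons n P)
  from Cons.prems(1) obtain k' where k': "k' \<in> Iset hold K (set P)" "n \<in> hold k'" "valid hold K P" by auto
  have sub: "set ks' \<subseteq> {k\<in>Iset hold K (set P). n \<notin> hold k}"
    using Cons.prems(3) by (simp add: Iset_insert)
  have "k' \<notin> set ks'" using sub k' by auto
  then have d: "distinct (k' # ks')" using Cons.prems(2) by simp
  have s: "set (k' # ks') \<subseteq> Iset hold K (set P)" using sub k' by auto
  have p: "peel hold (k' # ks')" using Cons.prems(4) sub k'(2) by auto
  from Cons.IH[OF k'(3) d s p] show ?case by auto
qed

lemma arith_base:
  fixes G x K M N Mp c g l :: nat
  assumes h1: "G * x \<le> G * M + x" and h2: "K \<le> x + l * M" and h3: "l + 2 = c"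
    and h4: "M * N = K * Mp" and h5: "c * Mp = N + g" and h6: "2 * g < Mp" and h7: "0 < M"
    and h8: "3 \<le> G"
  shows False
proof -
  define G' where "G' = int G" 
  have a1: "(G' - 1) * int x \<le> G' * int M" using h1 unfolding G'_def
    by (simp add: algebra_simps) (metis of_nat_add of_nat_le_iff of_nat_mult)
  have a2: "(G' - 1) * int K \<le> (G' - 1) * (int x + int l * int M)"
    using h2 h8 unfolding G'_def by (intro mult_left_mono) (auto simp flip: of_nat_mult of_nat_add)
  have a3: "(G' - 1) * int K \<le> G' * int M + (G' - 1) * int l * int M"
    using a1 a2 by (simp add: algebra_simps)
  have a4: "(G' - 1) * int K * int Mp \<le> (G' * int M + (G' - 1) * int l * int M) * int Mp"
    using a3 by (intro mult_right_mono) auto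
  have e4: "int M * int N = int K * int Mp" using h4 by (metis of_nat_mult)
  have a5: "((G' - 1) * int N) * int M \<le> ((G' + (G' - 1) * int l) * int Mp) * int M"
    using a4 e4 by (simp add: algebra_simps)
  have a6: "(G' - 1) * int N \<le> (G' + (G' - 1) * int l) * int Mp"
    using a5 h7 by (simp add: mult_le_cancel_right)
  have e5: "(int l + 2) * int Mp = int N + int g" using h5 h3 by (metis of_nat_add of_nat_mult of_nat_numeral)
  have a7: "(G' - 2) * int Mp \<le> (G' - 1) * int g"
  proof -
    have "(G' - 1) * ((int l + 2) * int Mp) = (G' - 1) * int N + (G' - 1) * int g"
      using e5 by (simp add: algebra_simps)
    then show ?thesis using a6 by (simp add: algebra_simps)
  qed
  have a8: "(G' - 2) * (2 * int g + 1) \<le> (G' - 2) * int Mp"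
    using h6 h8 unfolding G'_def by (intro mult_left_mono) auto
  have a9: "0 \<le> (G' - 3) * int g" using h8 unfolding G'_def by simp
  show False using a7 a8 a9 h8 unfolding G'_def by (simp add: algebra_simps)
qed


lemma arith_ind:
  fixes s t :: nat
  assumes "1 \<le> t" "1 \<le> s" "(t + 1) * s \<le> s + t + 1"
  shows "s = 1 \<or> (s = 2 \<and> t = 1)"
proof (cases "3 \<le> s")
  case True
  have a: "t * 3 \<le> t * s" using True by (intro mult_left_mono) auto
  have b: "(t + 1) * s = t * s + s" by (simp add: algebra_simps)
  show ?thesis using a b assms by linarith
next
  case False
  then have "s = 1 \<or> s = 2" using assms(2) by auto
  then show ?thesis using assms by auto
qed

locale comb_setup =
  fixes hold :: "nat \<Rightarrow> nat set" and N K Mp M c g :: nat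
  assumes hold_sub: "\<And>k. k \<in> {1..K} \<Longrightarrow> hold k \<subseteq> {1..N}"
    and hold_card: "\<And>k. k \<in> {1..K} \<Longrightarrow> card (hold k) = Mp"
    and deg: "\<And>n. n \<in> {1..N} \<Longrightarrow> card {k\<in>{1..K}. n \<in> hold k} = M"
    and MN: "M * N = K * Mp"
    and cMp: "c * Mp = N + g"
    and gpos: "0 < g" and g2: "2 * g < Mp"
    and Kpos: "0 < K"
begin

definition GG :: "nat list \<Rightarrow> nat set set" where
  "GG P = hold ` Iset hold K (set P)"

lemma Mppos: "0 < Mp" using g2 by simp
lemma Npos: "0 < N"
proof (rule ccontr)
  assume "\<not> 0 < N" then have "N = 0" by simp
  then have "K * Mp = 0" using MN by simp
  then show False using Kpos Mppos by simp
qed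
lemma Mpos: "0 < M"
proof (rule ccontr)
  assume "\<not> 0 < M" then have "M = 0" by simp
  then have "K * Mp = 0" using MN by simp
  then show False using Kpos Mppos by simp
qed
lemma cpos: "1 \<le> c"
proof (rule ccontr)
  assume "\<not> 1 \<le> c" then have "c = 0" by simp
  then show False using cMp Npos by simp
qed

lemma finite_Iset: "finite (Iset hold K P)" unfolding Iset_def by simp
lemma finite_GG: "finite (GG P)" unfolding GG_def using finite_Iset by simp

lemma GG_mem: "H \<in> GG P \<Longrightarrow> card H = Mp \<and> H \<subseteq> {1..N} \<and> finite H"
  unfolding GG_def Iset_def using hold_card hold_sub by (auto intro: finite_subset)

lemma valid_sub: "valid hold K P \<Longrightarrow> set P \<subseteq> {1..N} \<and> distinct P"
proof (induction P)
  case Nil then show ?case by simp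
next
  case (Cons n P)
  then obtain k where k: "k \<in> Iset hold K (set P)" "n \<in> hold k" by auto
  have "k \<in> {1..K}" using k(1) unfolding Iset_def by blast
  then have "n \<in> {1..N}" using hold_sub k(2) by blast
  moreover have "n \<notin> set P" using k unfolding Iset_def by auto
  ultimately show ?case using Cons by auto
qed

lemma union_bound:
  assumes "valid hold K P"
  shows "K \<le> card (Iset hold K (set P)) + length P * M"
proof -
  have "{1..K} \<subseteq> Iset hold K (set P) \<union> (\<Union>n\<in>set P. {k\<in>{1..K}. n \<in> hold k})"
    unfolding Iset_def by auto
  then have "card {1..K} \<le> card (Iset hold K (set P) \<union> (\<Union>n\<in>set P. {k\<in>{1..K}. n \<in> hold k}))"
    by (intro card_mono) (auto simp: finite_Iset)
  also have "\<dots> \<le> card (Iset hold K (set P)) + card (\<Union>n\<in>set P. {k\<in>{1..K}. n \<in> hold k})"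
    by (rule card_Un_le)
  also have "card (\<Union>n\<in>set P. {k\<in>{1..K}. n \<in> hold k}) \<le> (\<Sum>n\<in>set P. card {k\<in>{1..K}. n \<in> hold k})"
    by (rule card_UN_le) simp
  also have "(\<Sum>n\<in>set P. card {k\<in>{1..K}. n \<in> hold k}) = (\<Sum>n\<in>set P. M)"
    using valid_sub[OF assms] deg by (intro sum.cong) auto
  also have "\<dots> = card (set P) * M" by simp
  also have "\<dots> \<le> length P * M" by (simp add: card_length)
  finally show ?thesis by simp
qed

lemma cm1: "(c - 1) * M < K"
proof -
  have e: "(c - 1) * Mp = c * Mp - Mp" by (simp add: diff_mult_distrib)
  have "(c - 1) * Mp < N" unfolding e using cMp g2 Npos by linarith
  then have "(c - 1) * Mp * K < N * K" using Kpos by simp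
  then have "(c - 1) * M * N < K * N" using MN by (metis mult.assoc mult.commute)
  then show ?thesis by simp
qed

lemma Iset_ne:
  assumes "valid hold K P" "length P \<le> c - 1"
  shows "Iset hold K (set P) \<noteq> {}"
proof
  assume e: "Iset hold K (set P) = {}"
  have "K \<le> length P * M" using union_bound[OF assms(1)] e by simp
  also have "\<dots> \<le> (c - 1) * M" using assms(2) by simp
  finally show False using cm1 by simp
qed

lemma GG_Cons:
  assumes "valid hold K P" "n \<in> \<Union>(GG P)"
  shows "valid hold K (n # P)" "GG (n # P) = {H\<in>GG P. n \<notin> H}"
  using assms unfolding GG_def by (auto simp: Iset_insert)

lemma ne_diff:
  assumes "H1 \<in> GG P" "H2 \<in> GG P" "H1 \<noteq> H2"
  shows "\<exists>n. n \<in> H1 \<and> n \<notin> H2"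
proof (rule ccontr)
  assume "\<not> ?thesis"
  then have "H1 \<subseteq> H2" by auto
  moreover have "card H1 = card H2" "finite H2" using GG_mem assms by auto
  ultimately have "H1 = H2" using card_subset_eq by blast
  then show False using assms by simp
qed


lemma two_of_card:
  assumes "finite A" "A \<noteq> {}" "card A \<noteq> 1"
  shows "\<exists>a b. a \<in> A \<and> b \<in> A \<and> a \<noteq> b"
proof -
  obtain a where a: "a \<in> A" using assms(2) by blast
  show ?thesis
  proof (rule ccontr)
    assume "\<not> ?thesis"
    then have "A = {a}" using a by blast
    then show False using assms(3) by simp
  qed
qed

lemma GG_ne: "valid hold K P \<Longrightarrow> length P \<le> c - 1 \<Longrightarrow> GG P \<noteq> {}"
  using Iset_ne unfolding GG_def by simp

lemma mem_ne: "H \<in> GG P \<Longrightarrow> H \<noteq> {}"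
  using GG_mem[of H P] Mppos by auto

lemma struct0:
  assumes nochain: "\<not> (\<exists>P. valid hold K P \<and> length P = c \<and> Iset hold K (set P) \<noteq> {})"
    and v: "valid hold K P" and l: "length P + 1 = c"
  shows "card (GG P) = 1"
proof (rule ccontr)
  assume "card (GG P) \<noteq> 1"
  then obtain H1 H2 where H: "H1 \<in> GG P" "H2 \<in> GG P" "H1 \<noteq> H2"
    using two_of_card[OF finite_GG GG_ne[OF v]] l by force
  obtain n where n: "n \<in> H1" "n \<notin> H2" using ne_diff[OF H] by blast
  have nU: "n \<in> \<Union>(GG P)" using n H by blast
  have "H2 \<in> GG (n # P)" using GG_Cons(2)[OF v nU] H n by simp
  then have "Iset hold K (set (n # P)) \<noteq> {}" unfolding GG_def by auto
  moreover have "length (n # P) = c" using l by simp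
  ultimately show False using nochain GG_Cons(1)[OF v nU] by blast
qed

lemma card_one_disj: "card A = 1 \<Longrightarrow> (\<forall>H\<in>A. \<forall>H'\<in>A. H \<noteq> H' \<longrightarrow> H \<inter> H' = {})"
  by (auto simp: card_Suc_eq)


lemma step_base:
  assumes v: "valid hold K P" and l: "length P + 2 = c"
    and IH: "\<And>n. n \<in> \<Union>(GG P) \<Longrightarrow> card {H\<in>GG P. n \<notin> H} = 1"
  shows "card (GG P) = 2 \<and> (\<forall>H\<in>GG P. \<forall>H'\<in>GG P. H \<noteq> H' \<longrightarrow> H \<inter> H' = {})"
proof -
  let ?G = "GG P" and ?I = "Iset hold K (set P)"
  have lc: "length P \<le> c - 1" using l by simp
  have ne: "?G \<noteq> {}" using GG_ne[OF v lc] .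
  have two: "\<exists>H'\<in>?G. H' \<noteq> H" if H: "H \<in> ?G" for H
  proof -
    obtain n where n: "n \<in> H" using mem_ne[OF H] by blast
    then have "n \<in> \<Union>?G" using H by blast
    then have "card {H\<in>?G. n \<notin> H} = 1" using IH by blast
    then obtain H' where "H' \<in> {H\<in>?G. n \<notin> H}" by (metis card_1_singletonE insertI1)
    then show ?thesis using n by auto
  qed
  have w: "card ?I \<le> M + card {k\<in>?I. hold k = H}" if H: "H \<in> ?G" for H
  proof -
    obtain H' where H': "H' \<in> ?G" "H' \<noteq> H" using two[OF H] by blast
    obtain n where n: "n \<in> H'" "n \<notin> H" using ne_diff[OF H'(1) H H'(2)] by blast
    have nU: "n \<in> \<Union>?G" using n H' by blast
    have nN: "n \<in> {1..N}" using GG_mem[OF H'(1)] n by blast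
    have c1: "card {H\<in>?G. n \<notin> H} = 1" using IH[OF nU] .
    have Hin: "H \<in> {H\<in>?G. n \<notin> H}" using H n by simp
    have single: "{H\<in>?G. n \<notin> H} = {H}"
      using c1 Hin by (metis card_1_singletonE singletonD)
    have "?I \<subseteq> {k\<in>{1..K}. n \<in> hold k} \<union> {k\<in>?I. hold k = H}"
    proof
      fix k assume k: "k \<in> ?I"
      show "k \<in> {k\<in>{1..K}. n \<in> hold k} \<union> {k\<in>?I. hold k = H}"
      proof (cases "n \<in> hold k")
        case True then show ?thesis using k unfolding Iset_def by auto
      next
        case False
        then have "hold k \<in> {H\<in>?G. n \<notin> H}" using k unfolding GG_def by auto
        then show ?thesis using single k by auto
      qed
    qed
    then have "card ?I \<le> card ({k\<in>{1..K}. n \<in> hold k} \<union> {k\<in>?I. hold k = H})"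
      by (intro card_mono) (auto simp: finite_Iset)
    also have "\<dots> \<le> card {k\<in>{1..K}. n \<in> hold k} + card {k\<in>?I. hold k = H}"
      by (rule card_Un_le)
    finally show ?thesis using deg[OF nN] by simp
  qed
  have sumI: "card ?I = (\<Sum>H\<in>?G. card {k\<in>?I. hold k = H})"
  proof -
    have "card ?I = (\<Sum>k\<in>?I. (1::nat))" by simp
    also have "\<dots> = (\<Sum>H\<in>hold ` ?I. \<Sum>k\<in>{x\<in>?I. hold x = H}. (1::nat))"
      by (rule sum.image_gen[OF finite_Iset])
    finally show ?thesis unfolding GG_def by simp
  qed
  have "(\<Sum>H\<in>?G. card ?I) \<le> (\<Sum>H\<in>?G. M + card {k\<in>?I. hold k = H})"
    using w by (intro sum_mono) auto
  then have main: "card ?G * card ?I \<le> card ?G * M + card ?I"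
    using sumI by (simp add: sum.distrib)
  have lP: "length P = c - 2" using l by simp
  have ub: "K \<le> card ?I + (c - 2) * M" using union_bound[OF v] unfolding lP .
  have le2: "card ?G \<le> 2"
  proof (rule ccontr)
    assume "\<not> card ?G \<le> 2"
    then have g3: "3 \<le> card ?G" by simp
    have "c - 2 + 2 = c" using l by simp
    then show False
      using arith_base[OF main ub _ MN cMp g2 Mpos g3] by blast
  qed
  obtain H1 where H1: "H1 \<in> ?G" using ne by blast
  obtain H2 where H2: "H2 \<in> ?G" "H2 \<noteq> H1" using two[OF H1] by blast
  have sub: "{H1, H2} \<subseteq> ?G" using H1 H2 by auto
  have c2: "card {H1, H2} = 2" using H2 by simp
  have cG: "card ?G = 2" using card_mono[OF finite_GG sub] c2 le2 by simp
  have eqG0: "{H1, H2} = ?G" by (rule card_subset_eq[OF finite_GG sub]) (simp add: c2 cG)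
  then have eqG: "?G = {H1, H2}" by simp
  have disj: "H \<inter> H' = {}" if "H \<in> ?G" "H' \<in> ?G" "H \<noteq> H'" for H H'
  proof (rule ccontr)
    assume "H \<inter> H' \<noteq> {}"
    then obtain x where x: "x \<in> H" "x \<in> H'" by blast
    have "{H, H'} = ?G" using that eqG by auto
    then have e: "{H''\<in>?G. x \<notin> H''} = {}" using x by auto
    have xU: "x \<in> \<Union>?G" using x that by blast
    have "card {H''\<in>?G. x \<notin> H''} = 1" using IH[OF xU] .
    then show False unfolding e by simp
  qed
  show ?thesis using cG disj by blast
qed


lemma step_ind:
  assumes v: "valid hold K P" and l: "length P + t + 2 = c" and t1: "1 \<le> t"
    and IH: "\<And>n. n \<in> \<Union>(GG P) \<Longrightarrow> card {H\<in>GG P. n \<notin> H} = t + 1 \<and>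
        (\<forall>H\<in>{H\<in>GG P. n \<notin> H}. \<forall>H'\<in>{H\<in>GG P. n \<notin> H}. H \<noteq> H' \<longrightarrow> H \<inter> H' = {})"
  shows "card (GG P) = t + 2 \<and> (\<forall>H\<in>GG P. \<forall>H'\<in>GG P. H \<noteq> H' \<longrightarrow> H \<inter> H' = {})"
proof -
  let ?G = "GG P"
  let ?U = "\<Union>?G"
  have finU: "finite ?U" using finite_GG GG_mem by blast
  have lc: "length P \<le> c - 1" using l by simp
  have ne: "?G \<noteq> {}" using GG_ne[OF v lc] .
  obtain H0 where H0: "H0 \<in> ?G" using ne by blast
  obtain n0 where n0: "n0 \<in> H0" using mem_ne[OF H0] by blast
  have n0U: "n0 \<in> ?U" using n0 H0 by blast
  have part: "card ?G = card {H\<in>?G. n \<notin> H} + card {H\<in>?G. n \<in> H}" for n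
  proof -
    have "?G = {H\<in>?G. n \<notin> H} \<union> {H\<in>?G. n \<in> H}" by auto
    then have "card ?G = card ({H\<in>?G. n \<notin> H} \<union> {H\<in>?G. n \<in> H})" by simp
    also have "\<dots> = card {H\<in>?G. n \<notin> H} + card {H\<in>?G. n \<in> H}"
      by (rule card_Un_disjoint) (auto intro: finite_subset[OF _ finite_GG])
    finally show ?thesis .
  qed
  have cH: "card H = (\<Sum>n\<in>?U. if n \<in> H then 1 else 0)" if H: "H \<in> ?G" for H
  proof -
    have "(\<Sum>n\<in>?U. if n \<in> H then 1 else 0) = (\<Sum>n\<in>{n\<in>?U. n \<in> H}. (1::nat))"
      by (rule sum.inter_filter[OF finU, symmetric])
    also have "{n\<in>?U. n \<in> H} = H" using H by blast
    finally show ?thesis by simp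
  qed
  have cB: "card {H\<in>?G. n \<in> H} = (\<Sum>H\<in>?G. if n \<in> H then 1 else 0)" for n
    using sum.inter_filter[OF finite_GG[of P], of "\<lambda>_. (1::nat)" "\<lambda>H. n \<in> H"] by simp
  have dc: "(\<Sum>H\<in>?G. card H) = (\<Sum>n\<in>?U. card {H\<in>?G. n \<in> H})"
  proof -
    have "(\<Sum>H\<in>?G. card H) = (\<Sum>H\<in>?G. \<Sum>n\<in>?U. if n \<in> H then 1 else 0)"
      using cH by (intro sum.cong) auto
    also have "\<dots> = (\<Sum>n\<in>?U. \<Sum>H\<in>?G. if n \<in> H then 1 else 0)" by (rule sum.swap)
    also have "\<dots> = (\<Sum>n\<in>?U. card {H\<in>?G. n \<in> H})" using cB by simp
    finally show ?thesis .
  qed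
  have lhs: "(\<Sum>H\<in>?G. card H) = card ?G * Mp"
    using GG_mem by (simp add: sum.cong[of ?G ?G card "\<lambda>_. Mp"])
  have Bn: "card {H\<in>?G. n \<in> H} = card ?G - (t + 1)" if "n \<in> ?U" for n
    using part[of n] IH[OF that] by simp
  have rhs: "(\<Sum>n\<in>?U. card {H\<in>?G. n \<in> H}) = card ?U * (card ?G - (t + 1))"
    using Bn by simp
  have eq: "card ?G * Mp = card ?U * (card ?G - (t + 1))" using dc lhs rhs by simp
  define A0 where "A0 = {H\<in>?G. n0 \<notin> H}"
  have A0c: "card A0 = t + 1" and A0d: "\<forall>H\<in>A0. \<forall>H'\<in>A0. H \<noteq> H' \<longrightarrow> H \<inter> H' = {}"
    using IH[OF n0U] unfolding A0_def by auto
  have A0sub: "A0 \<subseteq> ?G" unfolding A0_def by auto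
  have cUA: "card (\<Union>A0) = (t + 1) * Mp"
  proof -
    have "card (\<Union>A0) = sum card A0"
      by (rule card_Union_disjoint) (use A0d A0sub GG_mem in \<open>auto simp: pairwise_def disjnt_def\<close>)
    also have "\<dots> = (\<Sum>H\<in>A0. Mp)" using A0sub GG_mem by (intro sum.cong) auto
    also have "\<dots> = card A0 * Mp" by simp
    finally show ?thesis using A0c by simp
  qed
  have UAsub: "\<Union>A0 \<subseteq> ?U" using A0sub by blast
  have n0A: "n0 \<notin> \<Union>A0" unfolding A0_def by blast
  have cU: "(t + 1) * Mp \<le> card ?U" using card_mono[OF finU UAsub] cUA by simp
  define s where "s = card ?G - (t + 1)"
  have Bn0: "card {H\<in>?G. n0 \<in> H} = s" using Bn[OF n0U] unfolding s_def .
  have s1: "1 \<le> s"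
  proof -
    have "H0 \<in> {H\<in>?G. n0 \<in> H}" using H0 n0 by simp
    then have "{H\<in>?G. n0 \<in> H} \<noteq> {}" by blast
    then have "card {H\<in>?G. n0 \<in> H} \<noteq> 0" using finite_subset[OF _ finite_GG, of "{H\<in>?G. n0 \<in> H}" P] by auto
    then show ?thesis using Bn0 by simp
  qed
  have cG: "card ?G = s + t + 1" using part[of n0] IH[OF n0U] Bn0 by simp
  have eq2: "(s + t + 1) * Mp = card ?U * s" using eq cG unfolding s_def by simp
  have "(t + 1) * Mp * s \<le> card ?U * s" using cU by simp
  then have "((t + 1) * s) * Mp \<le> (s + t + 1) * Mp" using eq2 by (simp add: algebra_simps)
  then have ineq: "(t + 1) * s \<le> s + t + 1" using Mppos mult_le_cancel2 by blast
  have cases: "s = 1 \<or> (s = 2 \<and> t = 1)" by (rule arith_ind[OF t1 s1 ineq])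
  have s_is1: "s = 1"
  proof (rule ccontr)
    assume "s \<noteq> 1"
    then have st: "s = 2" "t = 1" using cases by auto
    have "card ?U * 2 = 4 * Mp" using eq2 st by simp
    then have "card ?U = 2 * Mp" by simp
    then have "card (\<Union>A0) = card ?U" using cUA st by simp
    then have "\<Union>A0 = ?U" using card_subset_eq[OF finU UAsub] by simp
    then show False using n0A n0U by simp
  qed
  have disj: "H \<inter> H' = {}" if HH: "H \<in> ?G" "H' \<in> ?G" "H \<noteq> H'" for H H'
  proof (rule ccontr)
    assume "H \<inter> H' \<noteq> {}"
    then obtain x where x: "x \<in> H" "x \<in> H'" by blast
    have xU: "x \<in> ?U" using x HH by blast
    have "card {H\<in>?G. x \<in> H} = 1" using Bn[OF xU] s_is1 unfolding s_def by simp
    moreover have "{H, H'} \<subseteq> {H\<in>?G. x \<in> H}" using x HH by auto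
    ultimately have "card {H, H'} \<le> 1"
      using card_mono[OF finite_subset[OF _ finite_GG, of "{H\<in>?G. x \<in> H}" P]] by force
    then show False using HH(3) by simp
  qed
  show ?thesis using cG s_is1 disj by simp
qed


lemma struct:
  assumes nochain: "\<not> (\<exists>P. valid hold K P \<and> length P = c \<and> Iset hold K (set P) \<noteq> {})"
  shows "valid hold K P \<Longrightarrow> length P + t + 1 = c \<Longrightarrow>
    card (GG P) = t + 1 \<and> (\<forall>H\<in>GG P. \<forall>H'\<in>GG P. H \<noteq> H' \<longrightarrow> H \<inter> H' = {})"
proof (induction t arbitrary: P)
  case 0
  then have "card (GG P) = 1" using struct0[OF nochain] by simp
  then show ?case using card_one_disj by simp
next
  case (Suc t)
  have IH': "card {H\<in>GG P. n \<notin> H} = t + 1 \<and>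
        (\<forall>H\<in>{H\<in>GG P. n \<notin> H}. \<forall>H'\<in>{H\<in>GG P. n \<notin> H}. H \<noteq> H' \<longrightarrow> H \<inter> H' = {})"
    if nU: "n \<in> \<Union>(GG P)" for n
  proof -
    have v': "valid hold K (n # P)" using GG_Cons(1)[OF Suc.prems(1) nU] .
    have l': "length (n # P) + t + 1 = c" using Suc.prems(2) by simp
    show ?thesis using Suc.IH[OF v' l'] GG_Cons(2)[OF Suc.prems(1) nU] by simp
  qed
  show ?case
  proof (cases "t = 0")
    case True
    have l2: "length P + 2 = c" using Suc.prems(2) True by simp
    have "card (GG P) = 2 \<and> (\<forall>H\<in>GG P. \<forall>H'\<in>GG P. H \<noteq> H' \<longrightarrow> H \<inter> H' = {})"
      by (rule step_base[OF Suc.prems(1) l2]) (use IH' True in simp)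
    then show ?thesis using True by simp
  next
    case False
    have l2: "length P + t + 2 = c" using Suc.prems(2) by simp
    have t1: "1 \<le> t" using False by simp
    have "card (GG P) = t + 2 \<and> (\<forall>H\<in>GG P. \<forall>H'\<in>GG P. H \<noteq> H' \<longrightarrow> H \<inter> H' = {})"
      by (rule step_ind[OF Suc.prems(1) l2 t1]) (use IH' in blast)
    then show ?thesis by simp
  qed
qed

theorem chain_exists:
  "\<exists>ks. length ks = c + 1 \<and> distinct ks \<and> set ks \<subseteq> {1..K} \<and> peel hold ks"
proof (cases "\<exists>P. valid hold K P \<and> length P = c \<and> Iset hold K (set P) \<noteq> {}")
  case True
  then obtain P k where P: "valid hold K P" "length P = c" "k \<in> Iset hold K (set P)" by blast
  have kK: "k \<in> {1..K}" using P(3) unfolding Iset_def by blast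
  have "hold k \<noteq> {}" using hold_card[OF kK] Mppos by auto
  then have pk: "peel hold [k]" by auto
  from extract_chain[OF P(1) _ _ pk] P(3) P(2) show ?thesis by auto
next
  case False
  have v0: "valid hold K []" by simp
  have l0: "length [] + (c - 1) + 1 = c" using cpos by simp
  have st: "card (GG []) = c - 1 + 1" "\<forall>H\<in>GG []. \<forall>H'\<in>GG []. H \<noteq> H' \<longrightarrow> H \<inter> H' = {}"
    using struct[OF False v0 l0] by auto
  have cG: "card (GG []) = c" using st(1) cpos by simp
  have U: "\<Union>(GG []) = {1..N}"
  proof
    show "\<Union>(GG []) \<subseteq> {1..N}" using GG_mem by blast
  next
    show "{1..N} \<subseteq> \<Union>(GG [])"
    proof
      fix n assume n: "n \<in> {1..N}"
      have "card {k\<in>{1..K}. n \<in> hold k} \<noteq> 0" using deg[OF n] Mpos by simp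
      then obtain k where "k \<in> {1..K}" "n \<in> hold k" by (metis (no_types, lifting) card.empty empty_Collect_eq)
      then show "n \<in> \<Union>(GG [])" unfolding GG_def Iset_def by auto
    qed
  qed
  have "card (\<Union>(GG [])) = sum card (GG [])"
    by (rule card_Union_disjoint) (use st(2) GG_mem in \<open>auto simp: pairwise_def disjnt_def\<close>)
  also have "\<dots> = (\<Sum>H\<in>GG []. Mp)" using GG_mem by (intro sum.cong) auto
  also have "\<dots> = c * Mp" using cG by simp
  finally have "N = c * Mp" using U by simp
  then show ?thesis using cMp gpos by simp
qed

end



lemma pmf_map_sum:
  assumes "finite (set_pmf p)"
  shows "pmf (map_pmf f p) y = (\<Sum>x\<in>{x\<in>set_pmf p. f x = y}. pmf p x)"
proof -
  have "pmf (map_pmf f p) y = measure p (f -` {y})" by (rule pmf_map)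
  also have "\<dots> = measure p (f -` {y} \<inter> set_pmf p)" by (simp add: measure_Int_set_pmf)
  also have "\<dots> = (\<Sum>x\<in>f -` {y} \<inter> set_pmf p. pmf p x)"
    using assms by (intro measure_measure_pmf_finite) auto
  also have "f -` {y} \<inter> set_pmf p = {x\<in>set_pmf p. f x = y}" by auto
  finally show ?thesis .
qed

lemma exp_map:
  assumes "finite (set_pmf p)"
  shows "(\<Sum>y\<in>set_pmf (map_pmf f p). pmf (map_pmf f p) y * h y) = (\<Sum>x\<in>set_pmf p. pmf p x * h (f x))"
proof -
  have "(\<Sum>x\<in>set_pmf p. pmf p x * h (f x)) =
        (\<Sum>y\<in>f ` set_pmf p. \<Sum>x\<in>{x\<in>set_pmf p. f x = y}. pmf p x * h (f x))"
    by (rule sum.image_gen[OF assms])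
  also have "\<dots> = (\<Sum>y\<in>f ` set_pmf p. (\<Sum>x\<in>{x\<in>set_pmf p. f x = y}. pmf p x) * h y)"
    by (intro sum.cong refl) (auto simp: sum_distrib_right)
  also have "\<dots> = (\<Sum>y\<in>f ` set_pmf p. pmf (map_pmf f p) y * h y)"
    by (simp only: pmf_map_sum[OF assms])
  finally show ?thesis by simp
qed

lemma ent_as_sum:
  assumes "finite (set_pmf p)"
  shows "pmf_entropy b (map_pmf f p) = - (\<Sum>x\<in>set_pmf p. pmf p x * log b (pmf (map_pmf f p) (f x)))"
  unfolding pmf_entropy_def using exp_map[OF assms, of f "\<lambda>y. log b (pmf (map_pmf f p) y)"] by simp

lemma ent_map_le:
  assumes fin: "finite (set_pmf p)" and b: "1 < b"
  shows "pmf_entropy b (map_pmf f p) \<le> pmf_entropy b p"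
proof -
  have "(\<Sum>x\<in>set_pmf p. pmf p x * log b (pmf p x)) \<le> (\<Sum>x\<in>set_pmf p. pmf p x * log b (pmf (map_pmf f p) (f x)))"
  proof (rule sum_mono)
    fix x assume x: "x \<in> set_pmf p"
    have px: "0 < pmf p x" using x by (simp add: set_pmf_iff pmf_nonneg order_le_neq_trans)
    have "pmf p x \<le> (\<Sum>x'\<in>{x'\<in>set_pmf p. f x' = f x}. pmf p x')"
      by (rule member_le_sum) (use x fin in auto)
    moreover have "pmf (map_pmf f p) (f x) = (\<Sum>x'\<in>{x'\<in>set_pmf p. f x' = f x}. pmf p x')"
      by (rule pmf_map_sum[OF fin])
    ultimately have le: "pmf p x \<le> pmf (map_pmf f p) (f x)" by simp
    have "log b (pmf p x) \<le> log b (pmf (map_pmf f p) (f x))"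
      using le px b by simp
    then show "pmf p x * log b (pmf p x) \<le> pmf p x * log b (pmf (map_pmf f p) (f x))"
      using px by (intro mult_left_mono) auto
  qed
  then have "- (\<Sum>x\<in>set_pmf p. pmf p x * log b (pmf (map_pmf f p) (f x))) \<le> - (\<Sum>x\<in>set_pmf p. pmf p x * log b (pmf p x))"
    by simp
  also have "- (\<Sum>x\<in>set_pmf p. pmf p x * log b (pmf p x)) = pmf_entropy b p" by (simp add: pmf_entropy_def)
  finally have c: "- (\<Sum>x\<in>set_pmf p. pmf p x * log b (pmf (map_pmf f p) (f x))) \<le> pmf_entropy b p" .
  have e: "pmf_entropy b (map_pmf f p) = - (\<Sum>x\<in>set_pmf p. pmf p x * log b (pmf (map_pmf f p) (f x)))"
    by (rule ent_as_sum[OF fin])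
  show ?thesis unfolding e by (rule c)
qed

lemma ent_map_inj:
  assumes fin: "finite (set_pmf p)" and inj: "inj_on f (set_pmf p)"
  shows "pmf_entropy b (map_pmf f p) = pmf_entropy b p"
proof -
  have "pmf_entropy b (map_pmf f p) = - (\<Sum>x\<in>set_pmf p. pmf p x * log b (pmf (map_pmf f p) (f x)))"
    by (rule ent_as_sum[OF fin])
  also have "\<dots> = - (\<Sum>x\<in>set_pmf p. pmf p x * log b (pmf p x))" using pmf_map_inj[OF inj] by simp
  also have "\<dots> = pmf_entropy b p" by (simp add: pmf_entropy_def)
  finally show ?thesis .
qed

lemma gibbs:
  assumes fin: "finite (set_pmf p)" and b: "1 < b"
    and rpos: "\<And>x. x \<in> set_pmf p \<Longrightarrow> 0 < r x" and rsum: "(\<Sum>x\<in>set_pmf p. r x) \<le> 1"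
  shows "pmf_entropy b p \<le> - (\<Sum>x\<in>set_pmf p. pmf p x * log b (r x))"
proof -
  have lnb: "0 < ln b" using b by simp
  have key: "pmf p x * log b (r x) - pmf p x * log b (pmf p x) \<le> (r x - pmf p x) / ln b"
    if x: "x \<in> set_pmf p" for x
  proof -
    have px: "0 < pmf p x" using x by (simp add: set_pmf_iff pmf_nonneg order_le_neq_trans)
    have "pmf p x * log b (r x) - pmf p x * log b (pmf p x) = pmf p x * ln (r x / pmf p x) / ln b"
    proof -
      have "ln (r x / pmf p x) = ln (r x) - ln (pmf p x)" using px rpos[OF x] by (simp add: ln_div)
      then show ?thesis by (simp add: log_def right_diff_distrib diff_divide_distrib)
    qed
    also have "\<dots> \<le> pmf p x * (r x / pmf p x - 1) / ln b"
      using px rpos[OF x] lnb by (intro divide_right_mono mult_left_mono ln_le_minus_one) auto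
    also have "pmf p x * (r x / pmf p x - 1) = r x - pmf p x" using px by (simp add: field_simps)
    then have "pmf p x * (r x / pmf p x - 1) / ln b = (r x - pmf p x) / ln b" by simp
    finally show ?thesis .
  qed
  have "(\<Sum>x\<in>set_pmf p. pmf p x * log b (r x) - pmf p x * log b (pmf p x)) \<le> (\<Sum>x\<in>set_pmf p. (r x - pmf p x) / ln b)"
    using key by (intro sum_mono) auto
  also have "\<dots> = ((\<Sum>x\<in>set_pmf p. r x) - (\<Sum>x\<in>set_pmf p. pmf p x)) / ln b"
    by (simp add: sum_divide_distrib[symmetric] sum_subtractf)
  also have "(\<Sum>x\<in>set_pmf p. pmf p x) = 1" using sum_pmf_eq_1[OF fin] by simp
  also have "((\<Sum>x\<in>set_pmf p. r x) - 1) / ln b \<le> 0" using rsum lnb by (simp add: divide_nonpos_pos)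
  finally show ?thesis unfolding pmf_entropy_def by (simp add: sum_subtractf)
qed

lemma ent_le_card:
  assumes fin: "finite A" and sub: "set_pmf p \<subseteq> A" and b: "1 < b"
  shows "pmf_entropy b p \<le> log b (card A)"
proof -
  have finp: "finite (set_pmf p)" using fin sub by (rule finite_subset[rotated])
  have ne: "set_pmf p \<noteq> {}" by (rule set_pmf_not_empty)
  have cp: "0 < card (set_pmf p)" using finp ne by (simp add: card_gt_0_iff)
  have "pmf_entropy b p \<le> - (\<Sum>x\<in>set_pmf p. pmf p x * log b (1 / card (set_pmf p)))"
    by (rule gibbs[OF finp b]) (use cp in auto)
  also have "\<dots> = - ((\<Sum>x\<in>set_pmf p. pmf p x) * log b (1 / card (set_pmf p)))"
    by (simp add: sum_distrib_right)
  also have "\<dots> = log b (card (set_pmf p))"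
    using sum_pmf_eq_1[OF finp] cp b by (simp add: log_divide)
  also have "\<dots> \<le> log b (card A)"
    using cp b card_mono[OF fin sub] by simp
  finally show ?thesis .
qed

lemma ent_uniform:
  assumes "finite A" "A \<noteq> {}"
  shows "pmf_entropy b (pmf_of_set A) = log b (card A)"
proof -
  have c: "0 < card A" using assms by (simp add: card_gt_0_iff)
  have "pmf_entropy b (pmf_of_set A) = - (\<Sum>x\<in>A. (1 / card A) * log b (1 / card A))"
    unfolding pmf_entropy_def using assms by simp
  also have "\<dots> = - (card A * ((1 / card A) * log b (1 / card A)))" by simp
  also have "\<dots> = log b (card A)" using c by (simp add: log_divide)
  finally show ?thesis .
qed

lemma ent_pair:
  assumes fp: "finite (set_pmf p)" and fq: "finite (set_pmf q)"
  shows "pmf_entropy b (pair_pmf p q) = pmf_entropy b p + pmf_entropy b q"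
proof -
  have sp: "(\<Sum>x\<in>set_pmf p. pmf p x) = 1" using sum_pmf_eq_1[OF fp] by simp
  have sq: "(\<Sum>x\<in>set_pmf q. pmf q x) = 1" using sum_pmf_eq_1[OF fq] by simp
  have "(\<Sum>z\<in>set_pmf (pair_pmf p q). pmf (pair_pmf p q) z * log b (pmf (pair_pmf p q) z))
      = (\<Sum>z\<in>set_pmf p \<times> set_pmf q. pmf p (fst z) * pmf q (snd z) * log b (pmf p (fst z) * pmf q (snd z)))"
    by (intro sum.cong) (auto simp: pmf_pair)
  also have "\<dots> = (\<Sum>x\<in>set_pmf p. \<Sum>y\<in>set_pmf q. pmf p x * pmf q y * log b (pmf p x * pmf q y))"
    by (subst sum.cartesian_product) (simp add: case_prod_beta)
  also have "\<dots> = (\<Sum>x\<in>set_pmf p. \<Sum>y\<in>set_pmf q. pmf p x * pmf q y * log b (pmf p x) + pmf p x * pmf q y * log b (pmf q y))"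
  proof (intro sum.cong refl)
    fix x y assume x: "x \<in> set_pmf p" and y: "y \<in> set_pmf q"
    have px: "0 < pmf p x" using x by (simp add: set_pmf_iff pmf_nonneg order_le_neq_trans)
    have qy: "0 < pmf q y" using y by (simp add: set_pmf_iff pmf_nonneg order_le_neq_trans)
    show "pmf p x * pmf q y * log b (pmf p x * pmf q y) = pmf p x * pmf q y * log b (pmf p x) + pmf p x * pmf q y * log b (pmf q y)"
      using px qy by (simp add: log_mult distrib_left)
  qed
  also have "\<dots> = (\<Sum>x\<in>set_pmf p. pmf p x * log b (pmf p x) * (\<Sum>y\<in>set_pmf q. pmf q y)) + (\<Sum>x\<in>set_pmf p. pmf p x * (\<Sum>y\<in>set_pmf q. pmf q y * log b (pmf q y)))"
    by (simp add: sum.distrib sum_distrib_left sum_distrib_right mult_ac)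
  also have "\<dots> = (\<Sum>x\<in>set_pmf p. pmf p x * log b (pmf p x)) + (\<Sum>y\<in>set_pmf q. pmf q y * log b (pmf q y))"
    using sp sq by (simp add: sum_distrib_right[symmetric])
  finally show ?thesis unfolding pmf_entropy_def by simp
qed

lemma subadd:
  assumes fin: "finite (set_pmf P)" and b: "1 < b"
  shows "rv_entropy b P (\<lambda>w. (f w, g w)) \<le> rv_entropy b P f + rv_entropy b P g"
proof -
  let ?J = "map_pmf (\<lambda>w. (f w, g w)) P" and ?F = "map_pmf f P" and ?G = "map_pmf g P"
  have finJ: "finite (set_pmf ?J)" using fin by simp
  have finF: "finite (set_pmf ?F)" using fin by simp
  have finG: "finite (set_pmf ?G)" using fin by simp
  define r where "r z = pmf ?F (fst z) * pmf ?G (snd z)" for z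
  have subJ: "set_pmf ?J \<subseteq> set_pmf ?F \<times> set_pmf ?G" by auto
  have rpos: "0 < r z" if "z \<in> set_pmf ?J" for z
  proof -
    have a: "fst z \<in> set_pmf ?F" and c: "snd z \<in> set_pmf ?G" using that subJ by (auto simp del: set_map_pmf)
    show ?thesis unfolding r_def using pmf_positive[OF a] pmf_positive[OF c] by simp
  qed
  have "(\<Sum>z\<in>set_pmf ?J. r z) \<le> (\<Sum>z\<in>set_pmf ?F \<times> set_pmf ?G. r z)"
    using subJ finF finG by (intro sum_mono2) (auto simp: r_def pmf_nonneg)
  also have "\<dots> = (\<Sum>x\<in>set_pmf ?F. pmf ?F x) * (\<Sum>y\<in>set_pmf ?G. pmf ?G y)"
  proof -
    have "(\<Sum>z\<in>set_pmf ?F \<times> set_pmf ?G. r z) = (\<Sum>x\<in>set_pmf ?F. \<Sum>y\<in>set_pmf ?G. pmf ?F x * pmf ?G y)"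
      unfolding r_def by (simp add: sum.cartesian_product case_prod_beta)
    then show ?thesis by (simp add: sum_product)
  qed
  also have "\<dots> = 1" using sum_pmf_eq_1[OF finF] sum_pmf_eq_1[OF finG] by simp
  finally have rsum: "(\<Sum>z\<in>set_pmf ?J. r z) \<le> 1" .
  have "pmf_entropy b ?J \<le> - (\<Sum>z\<in>set_pmf ?J. pmf ?J z * log b (r z))"
    by (rule gibbs[OF finJ b rpos rsum])
  also have "(\<Sum>z\<in>set_pmf ?J. pmf ?J z * log b (r z)) = (\<Sum>w\<in>set_pmf P. pmf P w * log b (r (f w, g w)))"
    by (rule exp_map[OF fin])
  also have "\<dots> = (\<Sum>w\<in>set_pmf P. pmf P w * log b (pmf ?F (f w))) + (\<Sum>w\<in>set_pmf P. pmf P w * log b (pmf ?G (g w)))"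
  proof -
    have "pmf P w * log b (r (f w, g w)) = pmf P w * log b (pmf ?F (f w)) + pmf P w * log b (pmf ?G (g w))"
      if w: "w \<in> set_pmf P" for w
    proof -
      have a: "f w \<in> set_pmf ?F" and c: "g w \<in> set_pmf ?G" using w by auto
      have "0 < pmf ?F (f w)" "0 < pmf ?G (g w)" using pmf_positive[OF a] pmf_positive[OF c] by auto
      then show ?thesis unfolding r_def by (simp add: log_mult distrib_left)
    qed
    then show ?thesis by (simp add: sum.distrib[symmetric])
  qed
  also have "(\<Sum>w\<in>set_pmf P. pmf P w * log b (pmf ?F (f w))) = (\<Sum>x\<in>set_pmf ?F. pmf ?F x * log b (pmf ?F x))"
    by (rule exp_map[OF fin, symmetric])
  also have "(\<Sum>w\<in>set_pmf P. pmf P w * log b (pmf ?G (g w))) = (\<Sum>x\<in>set_pmf ?G. pmf ?G x * log b (pmf ?G x))"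
    by (rule exp_map[OF fin, symmetric])
  finally show ?thesis unfolding rv_entropy_def pmf_entropy_def by simp
qed




definition Gsum :: "('a, 'b) ring_scheme \<Rightarrow> nat \<Rightarrow> nat list \<Rightarrow> (nat \<Rightarrow> 'a list) \<Rightarrow> 'a list" where
  "Gsum F L xs W = foldr (\<lambda>k acc. map2 (add F) (W k) acc) xs (replicate L (zero F))"

lemma msum_Gsum: "msum F K L W = Gsum F L [1..<K+1] W"
  unfolding msum_def Gsum_def ..

lemma Gsum_Cons: "Gsum F L (k # xs) W = map2 (add F) (W k) (Gsum F L xs W)"
  unfolding Gsum_def by simp

lemma Gsum_cong: "(\<And>k. k \<in> set xs \<Longrightarrow> W k = W' k) \<Longrightarrow> Gsum F L xs W = Gsum F L xs W'"
  by (induction xs) (auto simp: Gsum_Cons, simp add: Gsum_def)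

lemma nth_map2': "length xs = L \<Longrightarrow> length ys = L \<Longrightarrow> i < L \<Longrightarrow> map2 f xs ys ! i = f (xs ! i) (ys ! i)"
  by simp

context field
begin

lemma vecs_iff: "xs \<in> vecs R L \<longleftrightarrow> length xs = L \<and> (\<forall>i<L. xs ! i \<in> carrier R)"
  unfolding vecs_def by (auto simp: in_set_conv_nth) (metis nth_mem subset_iff)

lemma vadd_vecs: "xs \<in> vecs R L \<Longrightarrow> ys \<in> vecs R L \<Longrightarrow> map2 (add R) xs ys \<in> vecs R L"
  unfolding vecs_iff by (auto intro: a_closed)

lemma zero_vecs: "replicate L \<zero> \<in> vecs R L"
  unfolding vecs_def by auto

lemma vadd_lcomm:
  assumes "xs \<in> vecs R L" "ys \<in> vecs R L" "zs \<in> vecs R L"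
  shows "map2 (add R) xs (map2 (add R) ys zs) = map2 (add R) ys (map2 (add R) xs zs)"
  using assms unfolding vecs_iff by (intro nth_equalityI) (auto intro: a_lcomm)

lemma vadd_zero:
  assumes "ys \<in> vecs R L"
  shows "map2 (add R) (replicate L \<zero>) ys = ys"
  using assms unfolding vecs_iff by (intro nth_equalityI) auto

lemma vadd_cancel:
  assumes "xs \<in> vecs R L" "ys \<in> vecs R L" "zs \<in> vecs R L"
    and "map2 (add R) xs zs = map2 (add R) ys zs"
  shows "xs = ys"
proof (rule nth_equalityI)
  show "length xs = length ys" using assms(1,2) unfolding vecs_iff by simp
  fix i assume "i < length xs"
  then have i: "i < L" using assms(1) unfolding vecs_iff by simp
  have "map2 (add R) xs zs ! i = map2 (add R) ys zs ! i" using assms(4) by simp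
  then have "xs ! i \<oplus> zs ! i = ys ! i \<oplus> zs ! i" using i assms(1-3) unfolding vecs_iff by simp
  then show "xs ! i = ys ! i" using i assms(1-3) unfolding vecs_iff by (simp add: add.right_cancel)
qed

lemma Gsum_vecs: "(\<And>k. k \<in> set xs \<Longrightarrow> W k \<in> vecs R L) \<Longrightarrow> Gsum R L xs W \<in> vecs R L"
proof (induction xs)
  case Nil then show ?case by (simp add: Gsum_def zero_vecs)
next
  case (Cons a xs) then show ?case by (simp add: Gsum_Cons vadd_vecs)
qed

lemma Gsum_split:
  assumes "distinct xs" "k \<in> set xs" "\<And>j. j \<in> set xs \<Longrightarrow> W j \<in> vecs R L"
  shows "Gsum R L xs W = map2 (add R) (W k) (Gsum R L xs (W(k := replicate L \<zero>)))"
  using assms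
proof (induction xs)
  case Nil then show ?case by simp
next
  case (Cons j ys)
  show ?case
  proof (cases "j = k")
    case True
    then have kys: "k \<notin> set ys" using Cons.prems(1) by simp
    have e: "Gsum R L ys (W(k := replicate L \<zero>)) = Gsum R L ys W"
      by (rule Gsum_cong) (use kys in auto)
    have gv: "Gsum R L ys W \<in> vecs R L" using Cons.prems(3) by (intro Gsum_vecs) auto
    have s1: "Gsum R L (j # ys) W = map2 (add R) (W k) (Gsum R L ys W)"
      unfolding Gsum_Cons True by (rule refl)
    have s2: "Gsum R L (j # ys) (W(k := replicate L \<zero>)) = map2 (add R) (replicate L \<zero>) (Gsum R L ys (W(k := replicate L \<zero>)))"
      unfolding Gsum_Cons True fun_upd_same by (rule refl)
    show ?thesis unfolding s1 s2 e vadd_zero[OF gv] by (rule refl)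
  next
    case False
    then have kys: "k \<in> set ys" using Cons.prems(2) by simp
    have IH: "Gsum R L ys W = map2 (add R) (W k) (Gsum R L ys (W(k := replicate L \<zero>)))"
    proof -
      have dy: "distinct ys" using Cons.prems(1) by simp
      have wy: "\<And>j'. j' \<in> set ys \<Longrightarrow> W j' \<in> vecs R L" using Cons.prems(3) by simp
      show ?thesis by (rule Cons.IH[OF dy kys wy])
    qed
    have v1: "W j \<in> vecs R L" "W k \<in> vecs R L" using Cons.prems(3) kys by auto
    have v2: "Gsum R L ys (W(k := replicate L \<zero>)) \<in> vecs R L"
      using Cons.prems(3) zero_vecs by (intro Gsum_vecs) auto
    have s1: "Gsum R L (j # ys) W = map2 (add R) (W j) (Gsum R L ys W)" by (rule Gsum_Cons)
    have s2: "Gsum R L (j # ys) (W(k := replicate L \<zero>)) = map2 (add R) ((W(k := replicate L \<zero>)) j) (Gsum R L ys (W(k := replicate L \<zero>)))"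
      by (rule Gsum_Cons)
    have wj: "(W(k := replicate L \<zero>)) j = W j" using False by simp
    show ?thesis unfolding s1 s2 wj IH by (rule vadd_lcomm[OF v1(1) v1(2) v2])
  qed
qed

lemma msum_upd:
  assumes W: "W \<in> msg_space R K L" and k: "k \<in> {1..K}" and v: "v \<in> vecs R L"
    and eq: "msum R K L (W(k := v)) = msum R K L W"
  shows "v = W k"
proof -
  have Wv: "\<And>j. j \<in> set [1..<K+1] \<Longrightarrow> W j \<in> vecs R L" using W unfolding msg_space_def by auto
  have Wv': "\<And>j. j \<in> set [1..<K+1] \<Longrightarrow> (W(k := v)) j \<in> vecs R L" using W v unfolding msg_space_def by auto
  have kin: "k \<in> set [1..<K+1]" using k by auto
  have d: "distinct [1..<K+1]" by simp
  have e1a: "Gsum R L [1..<K+1] (W(k:=v)) = map2 (add R) ((W(k:=v)) k) (Gsum R L [1..<K+1] ((W(k:=v))(k := replicate L \<zero>)))"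
    by (rule Gsum_split[OF d kin Wv'])
  have e1: "msum R K L (W(k := v)) = map2 (add R) v (Gsum R L [1..<K+1] (W(k := replicate L \<zero>)))"
    unfolding msum_Gsum using e1a unfolding fun_upd_same fun_upd_upd .
  have e2: "msum R K L W = map2 (add R) (W k) (Gsum R L [1..<K+1] (W(k := replicate L \<zero>)))"
    unfolding msum_Gsum by (rule Gsum_split[OF d kin Wv])
  have g: "Gsum R L [1..<K+1] (W(k := replicate L \<zero>)) \<in> vecs R L"
    using Wv zero_vecs by (intro Gsum_vecs) auto
  show ?thesis using vadd_cancel[OF v Wv[OF kin] g] eq e1 e2 by simp
qed

end



lemma card_ext:
  assumes "finite A" "finite V"
  shows "card {W. (\<forall>k\<in>A. W k \<in> V) \<and> (\<forall>k. k \<notin> A \<longrightarrow> W k = ([]::'x list))} = card V ^ card A"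
    and "finite {W. (\<forall>k\<in>A. W k \<in> V) \<and> (\<forall>k. k \<notin> A \<longrightarrow> W k = ([]::'x list))}"
proof -
  let ?S = "{W. (\<forall>k\<in>A. W k \<in> V) \<and> (\<forall>k. k \<notin> A \<longrightarrow> W k = ([]::'x list))}"
  have bij: "bij_betw (\<lambda>W. restrict W A) ?S (PiE A (\<lambda>_. V))"
  proof (rule bij_betw_byWitness[where f' = "\<lambda>f k. if k \<in> A then f k else []"])
    show "\<forall>W\<in>?S. (\<lambda>k. if k \<in> A then restrict W A k else []) = W" by (auto intro!: ext)
    show "\<forall>f\<in>PiE A (\<lambda>_. V). restrict (\<lambda>k. if k \<in> A then f k else []) A = f"
      by (auto simp: PiE_def extensional_def restrict_def intro!: ext)
    show "(\<lambda>W. restrict W A) ` ?S \<subseteq> PiE A (\<lambda>_. V)" by auto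
    show "(\<lambda>f k. if k \<in> A then f k else []) ` PiE A (\<lambda>_. V) \<subseteq> ?S" by auto
  qed
  show "card ?S = card V ^ card A"
    using bij_betw_same_card[OF bij] card_PiE[OF assms(1), of "\<lambda>_. V"] by simp
  show "finite ?S"
    using bij_betw_finite[OF bij] finite_PiE[OF assms(1), of "\<lambda>_. V"] assms(2) by simp
qed

lemma card_vecs: "finite (carrier F) \<Longrightarrow> card (vecs F L) = card (carrier F) ^ L \<and> finite (vecs F L)"
proof -
  have e: "vecs F L = {xs. set xs \<subseteq> carrier F \<and> length xs = L}" unfolding vecs_def by auto
  assume "finite (carrier F)"
  then show ?thesis unfolding e by (simp add: card_lists_length_eq finite_lists_length_eq)
qed

lemma trans_cong:
  "(\<And>j. j \<in> Z n \<Longrightarrow> W j = W' j) \<Longrightarrow> trans Z \<psi> n (W, q) = trans Z \<psi> n (W', q)"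
  unfolding trans_def by (simp cong: if_cong)

locale sctx =
  fixes F :: "'a ring" and K N Nr Mp L :: nat and Z :: "nat \<Rightarrow> nat set" and T :: "nat \<Rightarrow> nat"
    and \<psi> :: "nat \<Rightarrow> (nat \<Rightarrow> 'a list) \<Rightarrow> nat \<Rightarrow> 'a list" and PQ :: "nat pmf"
  assumes fld: "field F" and finF: "finite (carrier F)" and Lpos: "0 < L"
    and Kpos: "0 < K" and Npos: "0 < N" and Nrpos: "0 < Nr" and NrN: "Nr \<le> N"
    and Mpdef: "Mp = N - Nr + 1" and dvdNK: "N dvd K"
    and sec: "secure_scheme F K N Nr (K div N * Mp) L Z T \<psi> PQ"
begin

abbreviation "MM \<equiv> K div N * Mp"
end

sublocale sctx \<subseteq> field F by (rule fld)

context sctx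
begin

lemma Zsub: "n \<in> {1..N} \<Longrightarrow> Z n \<subseteq> {1..K}" using sec unfolding secure_scheme_def by blast
lemma Zcard: "n \<in> {1..N} \<Longrightarrow> card (Z n) \<le> MM" using sec unfolding secure_scheme_def by blast
lemma finPQ: "finite (set_pmf PQ)" using sec unfolding secure_scheme_def by blast
lemma decA: "A \<subseteq> {1..N} \<Longrightarrow> card A = Nr \<Longrightarrow> \<exists>dec. \<forall>\<omega>\<in>set_pmf (joint F K L PQ).
            dec (\<lambda>n. if n \<in> A then trans Z \<psi> n \<omega> else []) = msum F K L (fst \<omega>)"
  using sec unfolding secure_scheme_def by blast
lemma cmi0: "cond_mi (real (card (carrier F))) (joint F K L PQ) fst (trans_all N Z \<psi>) (\<lambda>\<omega>. msum F K L (fst \<omega>)) = 0"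
  using sec unfolding secure_scheme_def by blast

lemma MN: "MM * N = K * Mp"
  using dvdNK Npos by (metis dvd_div_mult_self mult.assoc mult.commute)

lemma msg_card: "card (msg_space F K L) = card (carrier F) ^ (K * L)"
  and msg_fin: "finite (msg_space F K L)"
proof -
  have c: "card (vecs F L) = card (carrier F) ^ L" "finite (vecs F L)" using card_vecs[OF finF] by auto
  have "card (msg_space F K L) = card (vecs F L) ^ card {1..K}"
    unfolding msg_space_def by (rule card_ext(1)) (use c in auto)
  also have "\<dots> = (card (carrier F) ^ L) ^ K" using c by simp
  also have "\<dots> = card (carrier F) ^ (K * L)" by (simp add: power_mult[symmetric] mult.commute)
  finally show "card (msg_space F K L) = card (carrier F) ^ (K * L)" .
  show "finite (msg_space F K L)"
    unfolding msg_space_def by (rule card_ext(2)) (use c in auto)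
qed

definition W0 :: "nat \<Rightarrow> 'a list" where "W0 = (\<lambda>k. if k \<in> {1..K} then replicate L \<zero>\<^bsub>F\<^esub> else [])"

lemma W0_msg: "W0 \<in> msg_space F K L"
  unfolding W0_def msg_space_def vecs_def using zero_closed by auto

lemma msg_ne: "msg_space F K L \<noteq> {}" using W0_msg by blast

lemma supp_joint: "set_pmf (joint F K L PQ) = msg_space F K L \<times> set_pmf PQ"
  unfolding joint_def using msg_fin msg_ne by simp

lemma fin_joint: "finite (set_pmf (joint F K L PQ))"
  using supp_joint msg_fin finPQ by simp

lemma upd_msg: "W \<in> msg_space F K L \<Longrightarrow> k \<in> {1..K} \<Longrightarrow> v \<in> vecs F L \<Longrightarrow> W(k := v) \<in> msg_space F K L"
  unfolding msg_space_def by auto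

definition hold :: "nat \<Rightarrow> nat set" where "hold k = {n\<in>{1..N}. k \<in> Z n}"

lemma hold_ge:
  assumes k: "k \<in> {1..K}"
  shows "Mp \<le> card (hold k)"
proof (rule ccontr)
  assume "\<not> Mp \<le> card (hold k)"
  then have lt: "card (hold k) < Mp" by simp
  let ?NH = "{1..N} - hold k"
  have hs: "hold k \<subseteq> {1..N}" unfolding hold_def by auto
  have "card ?NH = N - card (hold k)" using card_Diff_subset[OF finite_subset[OF hs] hs] by simp
  then have "Nr \<le> card ?NH" using lt Mpdef NrN by linarith
  then obtain A where A: "A \<subseteq> ?NH" "card A = Nr" by (meson obtain_subset_with_card_n)
  have AN: "A \<subseteq> {1..N}" using A by auto
  obtain dec where dec: "\<forall>\<omega>\<in>set_pmf (joint F K L PQ).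
            dec (\<lambda>n. if n \<in> A then trans Z \<psi> n \<omega> else []) = msum F K L (fst \<omega>)"
    using decA[OF AN A(2)] by blast
  obtain q where q: "q \<in> set_pmf PQ" using set_pmf_not_empty[of PQ] by blast
  define e where "e = \<one>\<^bsub>F\<^esub> # replicate (L - 1) \<zero>\<^bsub>F\<^esub>"
  have ev: "e \<in> vecs F L" unfolding e_def vecs_def
    using Lpos zero_closed one_closed by auto
  define W1 where "W1 = W0(k := e)"
  have W1m: "W1 \<in> msg_space F K L" unfolding W1_def by (rule upd_msg[OF W0_msg k ev])
  have s0: "(W0, q) \<in> set_pmf (joint F K L PQ)" using W0_msg q supp_joint by simp
  have s1: "(W1, q) \<in> set_pmf (joint F K L PQ)" using W1m q supp_joint by simp
  have args: "(\<lambda>n. if n \<in> A then trans Z \<psi> n (W1, q) else []) = (\<lambda>n. if n \<in> A then trans Z \<psi> n (W0, q) else [])"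
  proof (rule ext)
    fix n show "(if n \<in> A then trans Z \<psi> n (W1, q) else []) = (if n \<in> A then trans Z \<psi> n (W0, q) else [])"
    proof (cases "n \<in> A")
      case True
      then have "k \<notin> Z n" using A(1) unfolding hold_def by auto
      then have "trans Z \<psi> n (W1, q) = trans Z \<psi> n (W0, q)"
        unfolding W1_def by (intro trans_cong) auto
      then show ?thesis by simp
    qed simp
  qed
  have d1: "dec (\<lambda>n. if n \<in> A then trans Z \<psi> n (W1, q) else []) = msum F K L W1"
    using bspec[OF dec s1] by simp
  have d0: "dec (\<lambda>n. if n \<in> A then trans Z \<psi> n (W0, q) else []) = msum F K L W0"
    using bspec[OF dec s0] by simp
  have "msum F K L W1 = msum F K L W0" using d0 d1 args by simp
  then have "e = W0 k" using msum_upd[OF W0_msg k ev] unfolding W1_def by simp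
  then have "e = replicate L \<zero>\<^bsub>F\<^esub>" using k unfolding W0_def by simp
  then have "\<one>\<^bsub>F\<^esub> = \<zero>\<^bsub>F\<^esub>" unfolding e_def using Lpos by (cases L) auto
  then show False using one_not_zero by simp
qed

lemma double_count: "(\<Sum>k\<in>{1..K}. card (hold k)) = (\<Sum>n\<in>{1..N}. card (Z n))"
proof -
  have a: "card (hold k) = (\<Sum>n\<in>{1..N}. if k \<in> Z n then 1 else 0)" for k
    unfolding hold_def using sum.inter_filter[of "{1..N}" "\<lambda>_. (1::nat)" "\<lambda>n. k \<in> Z n"] by simp
  have b: "card (Z n) = (\<Sum>k\<in>{1..K}. if k \<in> Z n then 1 else 0)" if n: "n \<in> {1..N}" for n
  proof -
    have "Z n = {k\<in>{1..K}. k \<in> Z n}" using Zsub[OF n] by auto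
    then have "card (Z n) = card {k\<in>{1..K}. k \<in> Z n}" by simp
    also have "\<dots> = (\<Sum>k\<in>{1..K}. if k \<in> Z n then 1 else 0)"
      using sum.inter_filter[of "{1..K}" "\<lambda>_. (1::nat)" "\<lambda>k. k \<in> Z n"] by simp
    finally show ?thesis .
  qed
  have "(\<Sum>k\<in>{1..K}. card (hold k)) = (\<Sum>k\<in>{1..K}. \<Sum>n\<in>{1..N}. if k \<in> Z n then 1 else 0)"
    using a by simp
  also have "\<dots> = (\<Sum>n\<in>{1..N}. \<Sum>k\<in>{1..K}. if k \<in> Z n then 1 else 0)" by (rule sum.swap)
  also have "\<dots> = (\<Sum>n\<in>{1..N}. card (Z n))" using b by simp
  finally show ?thesis .
qed

lemma hold_eq: "k \<in> {1..K} \<Longrightarrow> card (hold k) = Mp"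
  and Z_eq: "n \<in> {1..N} \<Longrightarrow> card (Z n) = MM"
proof -
  have s1: "K * Mp \<le> (\<Sum>k\<in>{1..K}. card (hold k))"
    using sum_mono[of "{1..K}" "\<lambda>_. Mp" "\<lambda>k. card (hold k)"] hold_ge by simp
  have s2: "(\<Sum>n\<in>{1..N}. card (Z n)) \<le> N * MM"
    using sum_mono[of "{1..N}" "\<lambda>n. card (Z n)" "\<lambda>_. MM"] Zcard by simp
  have e: "N * MM = K * Mp" using MN by (simp add: mult.commute)
  have tot: "(\<Sum>k\<in>{1..K}. card (hold k)) = K * Mp" "(\<Sum>n\<in>{1..N}. card (Z n)) = N * MM"
    using s1 s2 double_count e by linarith+
  show "card (hold k) = Mp" if k: "k \<in> {1..K}" for k
  proof (rule ccontr)
    assume "card (hold k) \<noteq> Mp"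
    then have "Mp < card (hold k)" using hold_ge[OF k] by simp
    then have ex: "\<exists>a\<in>{1..K}. Mp < card (hold a)" using k by blast
    have all: "\<forall>x\<in>{1..K}. Mp \<le> card (hold x)" using hold_ge by blast
    have "(\<Sum>k\<in>{1..K}. Mp) < (\<Sum>k\<in>{1..K}. card (hold k))"
      by (rule sum_strict_mono_ex1[OF finite_atLeastAtMost all ex])
    then show False using tot by simp
  qed
  show "card (Z n) = MM" if n: "n \<in> {1..N}" for n
  proof (rule ccontr)
    assume "card (Z n) \<noteq> MM"
    then have "card (Z n) < MM" using Zcard[OF n] by simp
    then have ex: "\<exists>a\<in>{1..N}. card (Z a) < MM" using n by blast
    have all: "\<forall>x\<in>{1..N}. card (Z x) \<le> MM" using Zcard by blast
    have "(\<Sum>n\<in>{1..N}. card (Z n)) < (\<Sum>n\<in>{1..N}. MM)"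
      by (rule sum_strict_mono_ex1[OF finite_atLeastAtMost all ex])
    then show False using tot by simp
  qed
qed

end



context sctx
begin

lemma hold_sub': "hold k \<subseteq> {1..N}" unfolding hold_def by auto

lemma Wvec: "W \<in> msg_space F K L \<Longrightarrow> k \<in> {1..K} \<Longrightarrow> W k \<in> vecs F L"
  unfolding msg_space_def by auto

lemma peel_step:
  assumes W: "W \<in> msg_space F K L" and W': "W' \<in> msg_space F K L" and q: "q \<in> set_pmf PQ"
    and n: "n \<in> {1..N}" and kn: "k \<in> Z n"
    and agree: "\<And>j. j \<in> Z n \<Longrightarrow> j \<noteq> k \<Longrightarrow> W j = W' j"
    and eqt: "trans Z \<psi> n (W, q) = trans Z \<psi> n (W', q)"
  shows "W k = W' k"
proof -
  have k: "k \<in> {1..K}" using Zsub[OF n] kn by blast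
  define W'' where "W'' = W(k := W' k)"
  have W''m: "W'' \<in> msg_space F K L" unfolding W''_def by (rule upd_msg[OF W k Wvec[OF W' k]])
  let ?NH = "{1..N} - hold k"
  let ?A = "insert n ?NH"
  have nh: "n \<in> hold k" using n kn unfolding hold_def by auto
  have cNH: "card ?NH = N - Mp"
    using card_Diff_subset[OF finite_subset[OF hold_sub' finite_atLeastAtMost] hold_sub'] hold_eq[OF k] by simp
  have cA: "card ?A = Nr" using cNH nh Mpdef NrN Nrpos by simp
  have AN: "?A \<subseteq> {1..N}" using n by auto
  obtain dec where dec: "\<forall>\<omega>\<in>set_pmf (joint F K L PQ).
            dec (\<lambda>m. if m \<in> ?A then trans Z \<psi> m \<omega> else []) = msum F K L (fst \<omega>)"
    using decA[OF AN cA] by blast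
  have s0: "(W, q) \<in> set_pmf (joint F K L PQ)" using W q supp_joint by simp
  have s1: "(W'', q) \<in> set_pmf (joint F K L PQ)" using W''m q supp_joint by simp
  have args: "(\<lambda>m. if m \<in> ?A then trans Z \<psi> m (W'', q) else []) = (\<lambda>m. if m \<in> ?A then trans Z \<psi> m (W, q) else [])"
  proof (rule ext)
    fix m show "(if m \<in> ?A then trans Z \<psi> m (W'', q) else []) = (if m \<in> ?A then trans Z \<psi> m (W, q) else [])"
    proof (cases "m = n")
      case True
      have "trans Z \<psi> n (W'', q) = trans Z \<psi> n (W', q)"
        by (rule trans_cong) (use agree in \<open>auto simp: W''_def\<close>)
      then show ?thesis using True eqt by simp
    next
      case False
      show ?thesis
      proof (cases "m \<in> ?A")
        case True
        then have "k \<notin> Z m" using False unfolding hold_def by auto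
        then have "trans Z \<psi> m (W'', q) = trans Z \<psi> m (W, q)"
          unfolding W''_def by (intro trans_cong) auto
        then show ?thesis by simp
      next
        case False
        then show ?thesis by (simp only: False if_False)
      qed
    qed
  qed
  have d1: "dec (\<lambda>m. if m \<in> ?A then trans Z \<psi> m (W'', q) else []) = msum F K L W''"
    using bspec[OF dec s1] by simp
  have d0: "dec (\<lambda>m. if m \<in> ?A then trans Z \<psi> m (W, q) else []) = msum F K L W"
    using bspec[OF dec s0] by simp
  have "msum F K L (W(k := W' k)) = msum F K L W" using d0 d1 args unfolding W''_def by simp
  then have "W' k = W k" by (rule msum_upd[OF W k Wvec[OF W' k]])
  then show ?thesis by simp
qed

lemma peel_inj:
  assumes "peel hold ks" and W: "W \<in> msg_space F K L" and W': "W' \<in> msg_space F K L"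
    and q: "q \<in> set_pmf PQ"
    and eqX: "trans_all N Z \<psi> (W, q) = trans_all N Z \<psi> (W', q)"
    and agree: "\<And>j. j \<notin> set ks \<Longrightarrow> W j = W' j"
  shows "W = W'"
  using assms(1) agree
proof (induction ks)
  case Nil then show ?case by auto
next
  case (Cons k ks)
  from Cons.prems(1) obtain n where n: "n \<in> hold k" "\<forall>k'\<in>set ks. n \<notin> hold k'" and p: "peel hold ks" by auto
  have nN: "n \<in> {1..N}" and kn: "k \<in> Z n" using n(1) unfolding hold_def by auto
  have eqt: "trans Z \<psi> n (W, q) = trans Z \<psi> n (W', q)"
    using fun_cong[OF eqX, of n] nN unfolding trans_all_def by simp
  have ag: "W j = W' j" if "j \<in> Z n" "j \<noteq> k" for j
  proof -
    have "n \<in> hold j" using that nN unfolding hold_def by auto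
    then have "j \<notin> set ks" using n(2) by auto
    then show ?thesis using that Cons.prems(2) by simp
  qed
  have "W k = W' k" by (rule peel_step[OF W W' q nN kn ag eqt])
  then have "\<And>j. j \<notin> set ks \<Longrightarrow> W j = W' j" using Cons.prems(2) by (metis set_ConsD)
  then show ?case by (rule Cons.IH[OF p])
qed

end



context sctx
begin

lemma card_carrier_ge2: "2 \<le> card (carrier F)"
proof -
  have "{\<zero>\<^bsub>F\<^esub>, \<one>\<^bsub>F\<^esub>} \<subseteq> carrier F" using zero_closed one_closed by auto
  then have "card {\<zero>\<^bsub>F\<^esub>, \<one>\<^bsub>F\<^esub>} \<le> card (carrier F)" using finF by (rule card_mono[rotated])
  then show ?thesis using one_not_zero by simp
qed

lemma ent_ineq_core:
  fixes c :: nat and ks :: "nat list"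
  assumes ksl: "length ks = c + 1" and ksd: "distinct ks" and kss: "set ks \<subseteq> {1..K}" and ksp: "peel hold ks"
  shows "real c * real L \<le> pmf_entropy (real (card (carrier F))) PQ"
proof -
  define b where "b = real (card (carrier F))"
  have b1: "1 < b" using card_carrier_ge2 unfolding b_def by simp
  have logpow: "log b (real (card (carrier F) ^ n)) = real n" for n
    using b1 unfolding b_def by (simp add: log_nat_power)
  let ?P = "joint F K L PQ"
  let ?X = "trans_all N Z \<psi>"
  let ?S = "\<lambda>\<omega>. msum F K L (fst \<omega>)"
  define WJ where "WJ = (\<lambda>\<omega>::(nat \<Rightarrow> 'a list) \<times> nat. \<lambda>k. if k \<in> set ks then [] else fst \<omega> k)"
  have finP: "finite (set_pmf ?P)" by (rule fin_joint)
  have fin_msg_pmf: "finite (set_pmf (pmf_of_set (msg_space F K L)))" using msg_fin msg_ne by simp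
  have ent_msg: "pmf_entropy b (pmf_of_set (msg_space F K L)) = real (K * L)"
    using ent_uniform[OF msg_fin msg_ne] msg_card logpow by simp
  have ent_P: "pmf_entropy b ?P = real (K * L) + pmf_entropy b PQ"
    unfolding joint_def using ent_pair[OF fin_msg_pmf finPQ] ent_msg by simp
  have cmi: "rv_entropy b ?P (\<lambda>w. (fst w, ?S w)) + rv_entropy b ?P (\<lambda>w. (?X w, ?S w))
      - rv_entropy b ?P (\<lambda>w. (fst w, ?X w, ?S w)) - rv_entropy b ?P ?S = 0"
    using cmi0 unfolding cond_mi_def b_def by simp
  have h1: "rv_entropy b ?P (\<lambda>w. (fst w, ?X w, ?S w)) \<le> pmf_entropy b ?P"
    unfolding rv_entropy_def by (rule ent_map_le[OF finP b1])
  have h2: "real (K * L) \<le> rv_entropy b ?P (\<lambda>w. (fst w, ?S w))"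
  proof -
    have "pmf_entropy b (map_pmf fst (map_pmf (\<lambda>w. (fst w, ?S w)) ?P)) \<le> pmf_entropy b (map_pmf (\<lambda>w. (fst w, ?S w)) ?P)"
      by (rule ent_map_le) (use finP b1 in auto)
    moreover have "map_pmf fst (map_pmf (\<lambda>w. (fst w, ?S w)) ?P) = pmf_of_set (msg_space F K L)"
      unfolding joint_def by (simp add: map_pmf_comp map_fst_pair_pmf)
    ultimately show ?thesis unfolding rv_entropy_def using ent_msg by simp
  qed
  have h3: "rv_entropy b ?P ?X \<le> rv_entropy b ?P (\<lambda>w. (?X w, ?S w))"
  proof -
    have "pmf_entropy b (map_pmf fst (map_pmf (\<lambda>w. (?X w, ?S w)) ?P)) \<le> pmf_entropy b (map_pmf (\<lambda>w. (?X w, ?S w)) ?P)"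
      by (rule ent_map_le) (use finP b1 in auto)
    moreover have "map_pmf fst (map_pmf (\<lambda>w. (?X w, ?S w)) ?P) = map_pmf ?X ?P"
      by (simp add: map_pmf_comp)
    ultimately show ?thesis unfolding rv_entropy_def by simp
  qed
  have h4: "rv_entropy b ?P ?S \<le> real L"
  proof -
    have cv: "card (vecs F L) = card (carrier F) ^ L" "finite (vecs F L)" using card_vecs[OF finF] by auto
    have sub: "set_pmf (map_pmf ?S ?P) \<subseteq> vecs F L"
    proof
      fix v assume "v \<in> set_pmf (map_pmf ?S ?P)"
      then obtain w where w: "w \<in> set_pmf ?P" "v = ?S w" by auto
      then have Wm: "fst w \<in> msg_space F K L" using supp_joint by auto
      show "v \<in> vecs F L" unfolding w(2) msum_Gsum
        by (rule Gsum_vecs) (use Wm in \<open>auto simp: msg_space_def\<close>)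
    qed
    have "rv_entropy b ?P ?S \<le> log b (card (vecs F L))"
      unfolding rv_entropy_def by (rule ent_le_card[OF cv(2) sub b1])
    then show ?thesis using cv logpow by simp
  qed
  have HX1: "rv_entropy b ?P ?X - real L \<le> pmf_entropy b PQ"
    using cmi h1 h2 h3 h4 ent_P by linarith
  have inj: "inj_on (\<lambda>w. (?X w, (snd w, WJ w))) (set_pmf ?P)"
  proof (rule inj_onI)
    fix w w' assume w: "w \<in> set_pmf ?P" and w': "w' \<in> set_pmf ?P"
      and eq: "(?X w, (snd w, WJ w)) = (?X w', (snd w', WJ w'))"
    obtain W q where wq: "w = (W, q)" by (cases w)
    obtain W' q' where wq': "w' = (W', q')" by (cases w')
    have Wm: "W \<in> msg_space F K L" "q \<in> set_pmf PQ" using w wq supp_joint by auto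
    have Wm': "W' \<in> msg_space F K L" using w' wq' supp_joint by auto
    have qq: "q' = q" using eq wq wq' by simp
    have eqX: "trans_all N Z \<psi> (W, q) = trans_all N Z \<psi> (W', q)" using eq wq wq' qq by simp
    have ag: "W j = W' j" if "j \<notin> set ks" for j
      using fun_cong[of "WJ w" "WJ w'" j] eq that wq wq' unfolding WJ_def by simp
    have "W = W'" by (rule peel_inj[OF ksp Wm(1) Wm' Wm(2) eqX ag])
    then show "w = w'" using wq wq' qq by simp
  qed
  have h6: "rv_entropy b ?P (\<lambda>w. (?X w, (snd w, WJ w))) = pmf_entropy b ?P"
    unfolding rv_entropy_def by (rule ent_map_inj[OF finP inj])
  have h7: "rv_entropy b ?P (\<lambda>w. (?X w, (snd w, WJ w))) \<le> rv_entropy b ?P ?X + rv_entropy b ?P (\<lambda>w. (snd w, WJ w))"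
    by (rule subadd[OF finP b1])
  have h8: "rv_entropy b ?P (\<lambda>w. (snd w, WJ w)) \<le> rv_entropy b ?P snd + rv_entropy b ?P WJ"
    by (rule subadd[OF finP b1])
  have h9: "rv_entropy b ?P snd = pmf_entropy b PQ"
    unfolding rv_entropy_def joint_def by (simp add: map_snd_pair_pmf)
  have cK: "c + 1 \<le> K"
  proof -
    have "card (set ks) = c + 1" using distinct_card[OF ksd] ksl by simp
    moreover have "card (set ks) \<le> card {1..K}" by (rule card_mono[OF _ kss]) simp
    ultimately show ?thesis by simp
  qed
  have h10: "rv_entropy b ?P WJ \<le> real ((K - (c + 1)) * L)"
  proof -
    let ?D = "{1..K} - set ks"
    let ?E = "{W. (\<forall>k\<in>?D. W k \<in> vecs F L) \<and> (\<forall>k. k \<notin> ?D \<longrightarrow> W k = ([]::'a list))}"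
    have cv: "card (vecs F L) = card (carrier F) ^ L" "finite (vecs F L)" using card_vecs[OF finF] by auto
    have cD: "card ?D = K - (c + 1)"
      using card_Diff_subset[OF finite_subset[OF kss finite_atLeastAtMost] kss] distinct_card[OF ksd] ksl by simp
    have cE: "card ?E = card (vecs F L) ^ card ?D" and fE: "finite ?E"
      using card_ext[of ?D "vecs F L"] cv by auto
    have sub: "set_pmf (map_pmf WJ ?P) \<subseteq> ?E"
    proof
      fix v assume "v \<in> set_pmf (map_pmf WJ ?P)"
      then obtain w where w: "w \<in> set_pmf ?P" "v = WJ w" by auto
      then have Wm: "fst w \<in> msg_space F K L" using supp_joint by auto
      show "v \<in> ?E" unfolding w(2) WJ_def using Wm unfolding msg_space_def by auto
    qed
    have "rv_entropy b ?P WJ \<le> log b (card ?E)"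
      unfolding rv_entropy_def by (rule ent_le_card[OF fE sub b1])
    also have "card ?E = card (carrier F) ^ (L * (K - (c + 1)))"
      using cE cv cD by (simp add: power_mult)
    also have "log b (real (card (carrier F) ^ (L * (K - (c + 1))))) = real ((K - (c + 1)) * L)"
      using logpow by (simp add: mult.commute)
    finally show ?thesis .
  qed
  have HX2: "real ((c + 1) * L) \<le> rv_entropy b ?P ?X"
  proof -
    have k1: "K - (c + 1) + (c + 1) = K" using cK by simp
    have k2: "(K - (c + 1)) * L + (c + 1) * L = K * L" using k1 by (metis add_mult_distrib)
    have "real (K * L) = real ((K - (c + 1)) * L) + real ((c + 1) * L)"
      using k2 by (metis of_nat_add)
    then show ?thesis using ent_P h6 h7 h8 h9 h10 by linarith
  qed
  have "real c * real L = real ((c + 1) * L) - real L" by (simp add: algebra_simps)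
  then show ?thesis using HX1 HX2 unfolding b_def by linarith
qed

end

lemma arith_main:
  fixes N Mp :: nat
  assumes Npos: "0 < N" and b3: "Mp div gcd N Mp \<ge> 3"
    and md: "Modp (N div gcd N Mp) (Mp div gcd N Mp) = Mp div gcd N Mp - 1"
  shows "(N div gcd N Mp) div (Mp div gcd N Mp) + 1 = nat \<lceil>real N / real Mp\<rceil>"
    and "((N div gcd N Mp) div (Mp div gcd N Mp) + 1) * Mp = N + gcd N Mp"
    and "0 < gcd N Mp" and "2 * gcd N Mp < Mp"
proof -
  define g where "g = gcd N Mp"
  define a where "a = N div g"
  define bb where "bb = Mp div g"
  define c where "c = a div bb + 1"
  have gpos: "0 < g" unfolding g_def using Npos by simp
  have Na: "N = g * a" unfolding a_def g_def by simp
  have Mb: "Mp = g * bb" unfolding bb_def g_def by simp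
  have b3': "3 \<le> bb" using b3 unfolding bb_def g_def .
  have amod: "a mod bb = bb - 1"
  proof (cases "a mod bb = 0")
    case True
    then have "Modp a bb = bb" unfolding Modp_def by simp
    then show ?thesis using md b3' unfolding a_def bb_def g_def by simp
  next
    case False
    then have "Modp a bb = a mod bb" unfolding Modp_def by simp
    then show ?thesis using md unfolding a_def bb_def g_def by simp
  qed
  have adec: "a = bb * (a div bb) + (bb - 1)" using amod by (metis div_mult_mod_eq mult.commute)
  have ca: "c * bb = a + 1" unfolding c_def using adec b3' by (simp add: algebra_simps)
  have cMp: "c * Mp = N + g"
  proof -
    have "c * Mp = g * (c * bb)" unfolding Mb by (simp add: algebra_simps)
    also have "\<dots> = g * (a + 1)" using ca by simp
    finally show ?thesis unfolding Na by (simp add: algebra_simps)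
  qed
  have g2: "2 * g < Mp" unfolding Mb using gpos b3' by simp
  have Mppos: "0 < Mp" using g2 by simp
  have rN: "real N = real c * real Mp - real g" using cMp by (metis add_diff_cancel_right' of_nat_add of_nat_mult)
  have up: "real N / real Mp \<le> real c"
    using Mppos rN by (simp add: pos_divide_le_eq)
  have lo: "real c - 1 < real N / real Mp"
  proof -
    have "(real c - 1) * real Mp < real N" using rN g2 by (simp add: algebra_simps)
    then show ?thesis using Mppos by (simp add: pos_less_divide_eq)
  qed
  have "\<lceil>real N / real Mp\<rceil> = int c" unfolding ceiling_eq_iff using up lo by simp
  then show "(N div gcd N Mp) div (Mp div gcd N Mp) + 1 = nat \<lceil>real N / real Mp\<rceil>"
    unfolding c_def a_def bb_def g_def by simp
  show "((N div gcd N Mp) div (Mp div gcd N Mp) + 1) * Mp = N + gcd N Mp"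
    using cMp unfolding c_def a_def bb_def g_def .
  show "0 < gcd N Mp" using gpos unfolding g_def .
  show "2 * gcd N Mp < Mp" using g2 unfolding g_def .
qed

theorem lemma4:
  fixes K N Nr Mp :: nat
  assumes "0 < K" and "0 < N" and "0 < Nr" and "Nr \<le> N" and "N dvd K"
    and "Mp = N - Nr + 1"
    and "Mp div gcd N Mp \<ge> 3"
    and "Modp (N div gcd N Mp) (Mp div gcd N Mp) = Mp div gcd N Mp - 1"
  shows "\<exists>q0::nat. \<forall>(F :: 'a ring) L Z T \<psi> PQ.
     field F \<longrightarrow> finite (carrier F) \<longrightarrow> card (carrier F) \<ge> q0 \<longrightarrow> 0 < L \<longrightarrow>
     secure_scheme F K N Nr (K div N * Mp) L Z T \<psi> PQ \<longrightarrow>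
     comm_cost N Nr L T = opt_cost F K N Nr (K div N * Mp) L \<longrightarrow>
     rand_size F L PQ \<ge> of_int \<lceil>real N / real Mp\<rceil>"
proof (intro exI[of _ 0] allI impI)
  fix F :: "'a ring" and L Z T \<psi> PQ
  assume fld: "field F" and finF: "finite (carrier F)" and "card (carrier F) \<ge> 0" and Lpos: "0 < L"
    and sec: "secure_scheme F K N Nr (K div N * Mp) L Z T \<psi> PQ"
  define c where "c = (N div gcd N Mp) div (Mp div gcd N Mp) + 1"
  define g where "g = gcd N Mp"
  have cceil: "c = nat \<lceil>real N / real Mp\<rceil>" and cMp: "c * Mp = N + g" and gpos: "0 < g" and g2: "2 * g < Mp"
    using arith_main[OF assms(2) assms(7) assms(8)] unfolding c_def g_def by auto
  interpret S: sctx F K N Nr Mp L Z T \<psi> PQ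
    by (rule sctx.intro) (use assms fld finF Lpos sec in auto)
  interpret C: comb_setup S.hold N K Mp "K div N * Mp" c g
  proof unfold_locales
    show "\<And>k. k \<in> {1..K} \<Longrightarrow> S.hold k \<subseteq> {1..N}" using S.hold_sub' by blast
    show "\<And>k. k \<in> {1..K} \<Longrightarrow> card (S.hold k) = Mp" by (rule S.hold_eq)
    show "card {k \<in> {1..K}. n \<in> S.hold k} = K div N * Mp" if n: "n \<in> {1..N}" for n
    proof -
      have "{k \<in> {1..K}. n \<in> S.hold k} = Z n" using S.Zsub[OF n] n unfolding S.hold_def by auto
      then show ?thesis using S.Z_eq[OF n] by simp
    qed
    show "K div N * Mp * N = K * Mp" by (rule S.MN)
    show "c * Mp = N + g" by (rule cMp)
    show "0 < g" by (rule gpos)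
    show "2 * g < Mp" by (rule g2)
    show "0 < K" by (rule assms(1))
  qed
  obtain ks where ks: "length ks = c + 1" "distinct ks" "set ks \<subseteq> {1..K}" "peel S.hold ks"
    using C.chain_exists by blast
  have main: "real c * real L \<le> pmf_entropy (real (card (carrier F))) PQ"
    by (rule S.ent_ineq_core[OF ks])
  have "real c \<le> rand_size F L PQ"
    unfolding rand_size_def using main Lpos by (simp add: pos_le_divide_eq)
  moreover have "of_int \<lceil>real N / real Mp\<rceil> = real c"
  proof -
    have d: "0 \<le> real N / real Mp" by simp
    have "0 \<le> \<lceil>real N / real Mp\<rceil>" using d by (simp only: zero_le_ceiling)
    then show ?thesis unfolding cceil by simp
  qed
  ultimately show "rand_size F L PQ \<ge> of_int \<lceil>real N / real Mp\<rceil>" by simp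
qed

end
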